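(* Let $X$ be a Banach space and $Y$ a normed space over $K$, let $M>0$, and let $\{F_\alpha\}_{\alpha\in I}$ ($I$ an index set) be a family of continuous $M$-contraction operators from $X$ into $Y$. Suppose that (a) for every $x\in X$ there is a positive number $c_x$ with $\|F_\alpha(x)\|_Y\le c_x$ for every $\alpha\in I$; and (b) there exists a positive constant $L$ such that $\|F_\alpha(x_1+x_2)\|_Y\le L\,\|F_\alpha(x_1)+F_\alpha(x_2)\|_Y$ for every $\alpha\in I$ and all $x_1,x_2\in X$. Then $\{F_\alpha\}$ is uniformly norm bounded, i.e., there is a positive constant $c$ with $\|F_\alpha\|_{B(X,Y)}\le c$ for every $\alpha\in I$.
   Context: $K$ is $\mathbb{R}$ or $\mathbb{C}$; all normed spaces are nontrivial. Operators are arbitrary (not necessarily linear) maps. For normed spaces $X,Y$ and a map $F:X\to Y$, set $\|F\|_{B(X,Y)}=\max\left(\sup_{x\neq 0,x\in X}\frac{\|F(x)\|_Y}{\|x\|_X},\ \|F(0)\|_Y\right)\in[0,\infty]$, and let $B(X,Y)$ be the set of maps $F:X\to Y$ with $\|F\|_{B(X,Y)}<\infty$. An operator $F:X\to Y$ is an $M$-contraction operator if $\|F(kx)\|_Y\le M|k|\,\|F(x)\|_Y$ for every scalar $k\neq 0$ and every $x\neq 0$ in $X$. *)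

theory Defs
  imports "HOL-Analysis.Analysis"
begin

definition Bnorm :: "('a::real_normed_vector \<Rightarrow> 'b::real_normed_vector) \<Rightarrow> ereal" where
  "Bnorm F = max (SUP x\<in>{x. x \<noteq> 0}. ereal (norm (F x) / norm x)) (ereal (norm (F 0)))"

definition M_contraction :: "real \<Rightarrow> ('a::real_normed_vector \<Rightarrow> 'b::real_normed_vector) \<Rightarrow> bool" where
  "M_contraction M F \<longleftrightarrow>
     (\<forall>k::real. \<forall>x. k \<noteq> 0 \<longrightarrow> x \<noteq> 0 \<longrightarrow> norm (F (k *\<^sub>R x)) \<le> M * \<bar>k\<bar> * norm (F x))"

end

theory Submission
  imports Defs
begin

theorem theorem3:
  fixes F :: "'i \<Rightarrow> 'a::banach \<Rightarrow> 'b::real_normed_vector"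
    and I :: "'i set" and M :: real
  assumes X_nontriv: "\<exists>x::'a. x \<noteq> 0"
    and Y_nontriv: "\<exists>y::'b. y \<noteq> 0"
    and M_pos: "M > 0"
    and cont: "\<forall>\<alpha>\<in>I. continuous_on UNIV (F \<alpha>)"
    and contr: "\<forall>\<alpha>\<in>I. M_contraction M (F \<alpha>)"
    and pointwise: "\<forall>x. \<exists>c>0. \<forall>\<alpha>\<in>I. norm (F \<alpha> x) \<le> c"
    and quasi_add: "\<exists>L>0. \<forall>\<alpha>\<in>I. \<forall>x1 x2. norm (F \<alpha> (x1 + x2)) \<le> L * norm (F \<alpha> x1 + F \<alpha> x2)"
  shows "\<exists>c>0. \<forall>\<alpha>\<in>I. Bnorm (F \<alpha>) \<le> ereal c"
proof -
  define E where "E n = (\<Inter>\<alpha>\<in>I. {x. norm (F \<alpha> x) \<le> real n})" for n :: nat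
  have clE: "closed (E n)" for n
    unfolding E_def
  proof (intro closed_INT ballI)
    fix \<alpha> assume "\<alpha> \<in> I"
    then have "continuous_on UNIV (F \<alpha>)" using cont by blast
    then show "closed {x. norm (F \<alpha> x) \<le> real n}"
      by (intro closed_Collect_le) (auto intro: continuous_intros)
  qed
  have cover: "\<Union>(range E) = UNIV"
  proof (intro set_eqI iffI)
    fix x :: 'a
    obtain c where c: "c > 0" "\<forall>\<alpha>\<in>I. norm (F \<alpha> x) \<le> c" using pointwise by blast
    obtain n :: nat where "c \<le> real n" using real_arch_simple by blast
    then have "x \<in> E n" using c unfolding E_def by force
    then show "x \<in> \<Union>(range E)" by blast
  qed auto
  have "\<exists>n. interior (E n) \<noteq> {}"
  proof (rule ccontr)
    assume "\<not> (\<exists>n. interior (E n) \<noteq> {})"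
    then have "euclidean interior_of \<Union>(range E) = {}"
      using clE by (intro Baire_category_alt)
        (auto simp: completely_metrizable_space_euclidean)
    then show False using cover by simp
  qed
  then obtain n x0 where "x0 \<in> interior (E n)" by blast
  then obtain r where r: "r > 0" "ball x0 r \<subseteq> E n" using mem_interior by blast
  obtain L where L: "L > 0" "\<forall>\<alpha>\<in>I. \<forall>x1 x2. norm (F \<alpha> (x1 + x2)) \<le> L * norm (F \<alpha> x1 + F \<alpha> x2)"
    using quasi_add by blast
  obtain c1 where c1: "c1 > 0" "\<forall>\<alpha>\<in>I. norm (F \<alpha> (-x0)) \<le> c1" using pointwise by blast
  define K where "K = L * (real n + c1)"
  have Kpos: "K > 0" using L c1 unfolding K_def by (simp add: add_nonneg_pos)
  have small: "norm (F \<alpha> z) \<le> K" if "\<alpha> \<in> I" "norm z < r" for \<alpha> z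
  proof -
    have "x0 + z \<in> ball x0 r" using that by (simp add: dist_norm)
    then have a: "norm (F \<alpha> (x0 + z)) \<le> real n" using r that unfolding E_def by blast
    have "norm (F \<alpha> z) = norm (F \<alpha> ((x0 + z) + (-x0)))" by simp
    also have "\<dots> \<le> L * norm (F \<alpha> (x0 + z) + F \<alpha> (-x0))" using L that by blast
    also have "\<dots> \<le> L * (real n + c1)"
    proof -
      have "norm (F \<alpha> (x0 + z) + F \<alpha> (-x0)) \<le> norm (F \<alpha> (x0 + z)) + norm (F \<alpha> (-x0))"
        by (rule norm_triangle_ineq)
      also have "\<dots> \<le> real n + c1" using a c1 that by (simp add: add_mono)
      finally show ?thesis using L by (simp add: mult_left_mono)
    qed
    finally show ?thesis unfolding K_def .
  qed
  define c where "c = max (2 * M * K / r) K + 1"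
  have cpos: "c > 0" using Kpos unfolding c_def by linarith
  have "Bnorm (F \<alpha>) \<le> ereal c" if al: "\<alpha> \<in> I" for \<alpha>
  proof -
    have "ereal (norm (F \<alpha> x) / norm x) \<le> ereal c" if x: "x \<noteq> 0" for x
    proof -
      define k where "k = 2 * norm x / r"
      define y where "y = (r / (2 * norm x)) *\<^sub>R x"
      have kpos: "k > 0" using x r unfolding k_def by simp
      have xy: "x = k *\<^sub>R y" using x r unfolding k_def y_def by simp
      have ny: "norm y = r / 2" using x r unfolding y_def by simp
      have y0: "y \<noteq> 0" using ny r by auto
      have "norm (F \<alpha> x) \<le> M * \<bar>k\<bar> * norm (F \<alpha> y)"
      proof -
        have hc: "\<forall>k. \<forall>x. k \<noteq> 0 \<longrightarrow> x \<noteq> 0 \<longrightarrow> norm (F \<alpha> (k *\<^sub>R x)) \<le> M * \<bar>k\<bar> * norm (F \<alpha> x)"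
          using contr al unfolding M_contraction_def by blast
        then have "norm (F \<alpha> (k *\<^sub>R y)) \<le> M * \<bar>k\<bar> * norm (F \<alpha> y)"
        proof -
          from hc have "k \<noteq> 0 \<longrightarrow> y \<noteq> 0 \<longrightarrow> norm (F \<alpha> (k *\<^sub>R y)) \<le> M * \<bar>k\<bar> * norm (F \<alpha> y)"
            by blast
          then show ?thesis using kpos y0 by linarith
        qed
        then show ?thesis using kpos xy by simp
      qed
      also have "\<dots> \<le> M * k * K"
        using small[OF al, of y] ny r kpos M_pos by (simp add: mult_left_mono)
      finally have "norm (F \<alpha> x) / norm x \<le> M * k * K / norm x"
        using x by (simp add: divide_right_mono)
      also have "\<dots> = 2 * M * K / r" using x r unfolding k_def by (simp add: field_simps)
      also have "\<dots> \<le> c" unfolding c_def by linarith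
      finally show ?thesis by simp
    qed
    then have s: "(SUP x\<in>{x. x \<noteq> 0}. ereal (norm (F \<alpha> x) / norm x)) \<le> ereal c"
      by (intro SUP_least) auto
    have "norm (F \<alpha> 0) \<le> K" using small[OF al, of 0] r by simp
    then have "ereal (norm (F \<alpha> 0)) \<le> ereal c" unfolding c_def by simp
    then show ?thesis using s unfolding Bnorm_def by simp
  qed
  then show ?thesis using cpos by blast
qed

end
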